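(* Let $\epsilon\in(0,1)$ and consider the lower-bound construction with $d\ge\max\{d_s\log n_1,\log^2 n_1\}$, $n_1\ge 2d^3$, $\epsilon d_s$ an integer, and $d_s\ge C/\epsilon$ for a sufficiently large absolute constant $C$. Let $\mathcal{G}_1$ be the construction with $x=d_s$ and $\mathcal{G}_2$ the construction with $x=(1-\epsilon)d_s$. Then $$|r_{\mathcal{G}_1}(s,t)-r_{\mathcal{G}_2}(s,t)|>\frac{\epsilon}{4}\,r_{\mathcal{G}_1}(s,t).$$
   Context: Lower-bound construction: $S_1$ and $S_2$ are disjoint vertex sets with $|S_1|=n_1$, $|S_2|=n_2$, $n_2\ll n_1$. On $S_1$ there is a $d$-regular expander graph (spectral gap of its normalized Laplacian bounded below by an absolute constant); $S_2$ has no internal edges. A source vertex $s$ is added with $d_s$ neighbors: $x$ vertices $\mathcal{N}_1\subset S_1$ and $d_s-x$ vertices $\mathcal{N}_2\subset S_2$, chosen uniformly at random. A sink vertex $t$ is added and joined to every vertex of $S_1\cup S_2$. There are no other edges. $r_{\mathcal{G}}(s,t)=(\mathbf{e}_s-\mathbf{e}_t)^T\mathbf{L}^\dagger(\mathbf{e}_s-\mathbf{e}_t)$ with $\mathbf{L}$ the Laplacian of $\mathcal{G}$. *)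

theory Defs
  imports Complex_Main
begin

text \<open>Matrices over a finite vertex set V are functions nat => nat => real,
  taken to be 0 outside V x V.\<close>

definition mmul :: "nat set \<Rightarrow> (nat \<Rightarrow> nat \<Rightarrow> real) \<Rightarrow> (nat \<Rightarrow> nat \<Rightarrow> real) \<Rightarrow> nat \<Rightarrow> nat \<Rightarrow> real" where
  "mmul V A B = (\<lambda>i j. \<Sum>k\<in>V. A i k * B k j)"

definition is_pinv :: "nat set \<Rightarrow> (nat \<Rightarrow> nat \<Rightarrow> real) \<Rightarrow> (nat \<Rightarrow> nat \<Rightarrow> real) \<Rightarrow> bool" where
  "is_pinv V L X \<longleftrightarrow>
     (\<forall>i j. (i \<notin> V \<or> j \<notin> V) \<longrightarrow> X i j = 0) \<and>
     (\<forall>i\<in>V. \<forall>j\<in>V.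
        mmul V (mmul V L X) L i j = L i j \<and>
        mmul V (mmul V X L) X i j = X i j \<and>
        mmul V L X i j = mmul V L X j i \<and>
        mmul V X L i j = mmul V X L j i)"

definition pinv :: "nat set \<Rightarrow> (nat \<Rightarrow> nat \<Rightarrow> real) \<Rightarrow> nat \<Rightarrow> nat \<Rightarrow> real" where
  "pinv V L = (THE X. is_pinv V L X)"

text \<open>Simple graph given by vertex set V and symmetric irreflexive adjacency relation.\<close>
definition gdeg :: "nat set \<Rightarrow> (nat \<Rightarrow> nat \<Rightarrow> bool) \<Rightarrow> nat \<Rightarrow> nat" where
  "gdeg V adj u = card {v \<in> V. adj u v}"

definition laplacian :: "nat set \<Rightarrow> (nat \<Rightarrow> nat \<Rightarrow> bool) \<Rightarrow> nat \<Rightarrow> nat \<Rightarrow> real" where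
  "laplacian V adj = (\<lambda>u v. if u \<in> V \<and> v \<in> V then
      (if u = v then real (gdeg V adj u) else 0) - (if adj u v then 1 else 0) else 0)"

definition eff_res :: "nat set \<Rightarrow> (nat \<Rightarrow> nat \<Rightarrow> bool) \<Rightarrow> nat \<Rightarrow> nat \<Rightarrow> real" where
  "eff_res V adj s t =
     (let b = (\<lambda>u. (if u = s then 1 else 0) - (if u = t then 1 else 0) :: real);
          P = pinv V (laplacian V adj)
      in \<Sum>u\<in>V. \<Sum>v\<in>V. b u * P u v * b v)"

definition norm_laplacian :: "nat set \<Rightarrow> (nat \<Rightarrow> nat \<Rightarrow> bool) \<Rightarrow> nat \<Rightarrow> nat \<Rightarrow> real" where
  "norm_laplacian V adj = (\<lambda>u v.
      (if u = v \<and> gdeg V adj u > 0 then 1 else 0)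
      - (if adj u v then 1 / sqrt (real (gdeg V adj u) * real (gdeg V adj v)) else 0))"

text \<open>Spectral gap = second smallest eigenvalue lambda_2 of the normalized Laplacian,
  via the Courant--Fischer formula (the smallest eigenvalue 0 has eigenvector D^(1/2) 1).\<close>
definition spectral_gap :: "nat set \<Rightarrow> (nat \<Rightarrow> nat \<Rightarrow> bool) \<Rightarrow> real" where
  "spectral_gap V adj = Inf
     {(\<Sum>u\<in>V. \<Sum>v\<in>V. f u * norm_laplacian V adj u v * f v) / (\<Sum>u\<in>V. (f u)^2) | f.
        (\<exists>u\<in>V. f u \<noteq> 0) \<and> (\<Sum>u\<in>V. sqrt (real (gdeg V adj u)) * f u) = 0}"

definition constr_adj :: "nat set \<Rightarrow> nat set \<Rightarrow> (nat \<Rightarrow> nat \<Rightarrow> bool) \<Rightarrow> nat \<Rightarrow> nat \<Rightarrow>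
    nat set \<Rightarrow> nat set \<Rightarrow> nat \<Rightarrow> nat \<Rightarrow> bool" where
  "constr_adj S1 S2 E s t N1 N2 = (\<lambda>u v.
      (u \<in> S1 \<and> v \<in> S1 \<and> E u v)
    \<or> (u = s \<and> v \<in> N1 \<union> N2) \<or> (v = s \<and> u \<in> N1 \<union> N2)
    \<or> (u = t \<and> v \<in> S1 \<union> S2) \<or> (v = t \<and> u \<in> S1 \<union> S2))"

end

theory Submission
  imports Defs "Jordan_Normal_Form.Determinant"
begin

lemma inv_exists:
  fixes V :: "nat set" and Mf :: "nat \<Rightarrow> nat \<Rightarrow> real"
  assumes fin: "finite V"
    and inj: "\<And>x. (\<forall>u\<in>V. (\<Sum>w\<in>V. Mf u w * x w) = 0) \<Longrightarrow> (\<forall>u\<in>V. x u = 0)"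
  shows "\<exists>Bf. (\<forall>u\<in>V. \<forall>v\<in>V. (\<Sum>w\<in>V. Mf u w * Bf w v) = (if u = v then 1 else 0)) \<and>
              (\<forall>u\<in>V. \<forall>v\<in>V. (\<Sum>w\<in>V. Bf u w * Mf w v) = (if u = v then 1 else 0))"
proof -
  define n where "n = card V"
  define vs where "vs = sorted_list_of_set V"
  have len: "length vs = n" and dist: "distinct vs" and setv: "set vs = V"
    using fin by (auto simp: vs_def n_def)
  have bij: "bij_betw (nth vs) {..<n} V" using bij_betw_nth[OF dist] len setv by auto
  define idx where "idx = inv_into {..<n} (nth vs)"
  have idx1: "idx u < n" "vs ! (idx u) = u" if "u \<in> V" for u
    using that bij unfolding idx_def
    by (auto simp: bij_betw_def inv_into_into f_inv_into_f)
  have idx2: "idx (vs ! i) = i" if "i < n" for i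
    using that bij unfolding idx_def by (auto simp: bij_betw_def inv_into_f_f)
  have reind: "(\<Sum>w\<in>V. f w) = (\<Sum>j<n. f (vs ! j))" for f :: "nat \<Rightarrow> real"
    using sum.reindex_bij_betw[OF bij, of f] by simp
  define A where "A = mat n n (\<lambda>(i,j). Mf (vs!i) (vs!j))"
  have Ac: "A \<in> carrier_mat n n" by (simp add: A_def)
  have "det A \<noteq> 0"
  proof
    assume "det A = 0"
    then obtain v where v: "v \<in> carrier_vec n" "v \<noteq> 0\<^sub>v n" "A *\<^sub>v v = 0\<^sub>v n"
      using det_0_iff_vec_prod_zero[OF Ac] by auto
    define x where "x u = v $ idx u" for u
    have "\<forall>u\<in>V. (\<Sum>w\<in>V. Mf u w * x w) = 0"
    proof
      fix u assume u: "u \<in> V"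
      have "(\<Sum>w\<in>V. Mf u w * x w) = (\<Sum>j<n. Mf u (vs!j) * v $ j)"
        by (simp add: reind x_def idx2)
      also have "\<dots> = (A *\<^sub>v v) $ idx u"
        using v(1) idx1[OF u] by (simp add: A_def scalar_prod_def lessThan_atLeast0)
      also have "\<dots> = 0" using v(3) idx1[OF u] by simp
      finally show "(\<Sum>w\<in>V. Mf u w * x w) = 0" .
    qed
    then have x0: "\<forall>u\<in>V. x u = 0" by (rule inj)
    have "v = 0\<^sub>v n"
    proof (rule eq_vecI)
      fix i assume "i < dim_vec (0\<^sub>v n :: real vec)"
      then have i: "i < n" by simp
      have "vs ! i \<in> V" using i len setv by auto
      then have "x (vs ! i) = 0" using x0 by auto
      then show "v $ i = 0\<^sub>v n $ i" using i by (simp add: x_def idx2)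
    qed (use v(1) in auto)
    then show False using v(2) by simp
  qed
  then have "A \<in> Units (ring_mat TYPE(real) n ())" by (rule det_non_zero_imp_unit[OF Ac])
  then obtain B where B: "B \<in> carrier_mat n n" "B * A = 1\<^sub>m n" "A * B = 1\<^sub>m n"
    unfolding Units_def by (auto simp: ring_mat_simps)
  define Bf where "Bf u w = B $$ (idx u, idx w)" for u w
  have "\<forall>u\<in>V. \<forall>v\<in>V. (\<Sum>w\<in>V. Mf u w * Bf w v) = (if u = v then 1 else 0)"
  proof (intro ballI)
    fix u v assume u: "u \<in> V" and v: "v \<in> V"
    have "(\<Sum>w\<in>V. Mf u w * Bf w v) = (\<Sum>j<n. Mf u (vs!j) * B $$ (j, idx v))"
      by (simp add: reind Bf_def idx2)
    also have "\<dots> = (A * B) $$ (idx u, idx v)"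
      using B(1) idx1[OF u] idx1[OF v] by (simp add: A_def scalar_prod_def lessThan_atLeast0 idx1)
    also have "\<dots> = (if idx u = idx v then 1 else 0)" using B(3) idx1[OF u] idx1[OF v] by simp
    also have "\<dots> = (if u = v then 1 else 0)" using idx1(2)[OF u] idx1(2)[OF v] by metis
    finally show "(\<Sum>w\<in>V. Mf u w * Bf w v) = (if u = v then 1 else 0)" .
  qed
  moreover have "\<forall>u\<in>V. \<forall>v\<in>V. (\<Sum>w\<in>V. Bf u w * Mf w v) = (if u = v then 1 else 0)"
  proof (intro ballI)
    fix u v assume u: "u \<in> V" and v: "v \<in> V"
    have "(\<Sum>w\<in>V. Bf u w * Mf w v) = (\<Sum>j<n. B $$ (idx u, j) * Mf (vs!j) v)"
      by (simp add: reind Bf_def idx2)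
    also have "\<dots> = (B * A) $$ (idx u, idx v)"
      using B(1) idx1[OF u] idx1[OF v] by (simp add: A_def scalar_prod_def lessThan_atLeast0 idx1)
    also have "\<dots> = (if idx u = idx v then 1 else 0)" using B(2) idx1[OF u] idx1[OF v] by simp
    also have "\<dots> = (if u = v then 1 else 0)" using idx1(2)[OF u] idx1(2)[OF v] by metis
    finally show "(\<Sum>w\<in>V. Bf u w * Mf w v) = (if u = v then 1 else 0)" .
  qed
  ultimately show ?thesis by blast
qed

lemma mmul_assoc: "mmul V (mmul V A B) C = mmul V A (mmul V B C)"
proof (intro ext)
  fix i j
  have "mmul V (mmul V A B) C i j = (\<Sum>k\<in>V. \<Sum>l\<in>V. A i l * B l k * C k j)"
    unfolding mmul_def by (simp add: sum_distrib_right)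
  also have "\<dots> = (\<Sum>l\<in>V. \<Sum>k\<in>V. A i l * B l k * C k j)" by (rule sum.swap)
  also have "\<dots> = mmul V A (mmul V B C) i j"
    unfolding mmul_def by (simp add: sum_distrib_left mult.assoc)
  finally show "mmul V (mmul V A B) C i j = mmul V A (mmul V B C) i j" .
qed

lemma mmul_assoc_pt: "mmul V (mmul V A B) C i j = mmul V A (mmul V B C) i j"
  by (simp add: mmul_assoc)

lemma pinv_LP:
  fixes V :: "nat set" and L :: "nat \<Rightarrow> nat \<Rightarrow> real"
  assumes fin: "finite V" and ne: "V \<noteq> {}"
    and sym: "\<forall>i\<in>V. \<forall>j\<in>V. L i j = L j i"
    and rows: "\<forall>i\<in>V. (\<Sum>j\<in>V. L i j) = 0"
    and ker: "\<And>x. (\<forall>u\<in>V. (\<Sum>w\<in>V. L u w * x w) = 0) \<Longrightarrow> \<forall>u\<in>V. \<forall>v\<in>V. x u = x v"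
  shows "\<forall>u\<in>V. \<forall>v\<in>V. mmul V L (pinv V L) u v = (if u = v then 1 else 0) - 1 / real (card V)"
proof -
  define n where "n = real (card V)"
  have npos: "n > 0" using fin ne by (simp add: n_def card_gt_0_iff)
  have cols: "\<forall>j\<in>V. (\<Sum>i\<in>V. L i j) = 0"
  proof
    fix j assume j: "j \<in> V"
    have "(\<Sum>i\<in>V. L i j) = (\<Sum>i\<in>V. L j i)" using sym j by (intro sum.cong) auto
    then show "(\<Sum>i\<in>V. L i j) = 0" using rows j by simp
  qed
  define Mf where "Mf u w = L u w + 1 / n" for u w
  have inj: "\<forall>u\<in>V. x u = 0" if hx: "\<forall>u\<in>V. (\<Sum>w\<in>V. Mf u w * x w) = 0" for x
  proof -
    have "0 = (\<Sum>u\<in>V. \<Sum>w\<in>V. Mf u w * x w)" using hx by simp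
    also have "\<dots> = (\<Sum>w\<in>V. (\<Sum>u\<in>V. Mf u w) * x w)"
      by (subst sum.swap) (simp add: sum_distrib_right)
    also have "\<dots> = (\<Sum>w\<in>V. x w)"
    proof (rule sum.cong)
      fix w assume w: "w \<in> V"
      have "(\<Sum>u\<in>V. Mf u w) = (\<Sum>u\<in>V. L u w) + n * (1 / n)"
        by (simp add: Mf_def sum.distrib n_def)
      also have "\<dots> = 1" using cols w npos by simp
      finally show "(\<Sum>u\<in>V. Mf u w) * x w = x w" by simp
    qed simp
    finally have sx: "(\<Sum>w\<in>V. x w) = 0" by simp
    have "\<forall>u\<in>V. (\<Sum>w\<in>V. L u w * x w) = 0"
    proof
      fix u assume u: "u \<in> V"
      have "(\<Sum>w\<in>V. Mf u w * x w) = (\<Sum>w\<in>V. L u w * x w) + (\<Sum>w\<in>V. x w) / n"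
        by (simp add: Mf_def distrib_right sum.distrib sum_divide_distrib)
      then show "(\<Sum>w\<in>V. L u w * x w) = 0" using hx u sx by simp
    qed
    then have const: "\<forall>u\<in>V. \<forall>v\<in>V. x u = x v" by (rule ker)
    obtain u0 where u0: "u0 \<in> V" using ne by auto
    have "(\<Sum>w\<in>V. x w) = (\<Sum>w\<in>V. x u0)" using const u0 by (intro sum.cong refl) blast
    then have "n * x u0 = 0" using sx by (simp add: n_def)
    then have "x u0 = 0" using npos by simp
    then show ?thesis using const u0 by metis
  qed
  obtain Bf where B1: "\<forall>u\<in>V. \<forall>v\<in>V. (\<Sum>w\<in>V. Mf u w * Bf w v) = (if u = v then 1 else 0)"
    and B2: "\<forall>u\<in>V. \<forall>v\<in>V. (\<Sum>w\<in>V. Bf u w * Mf w v) = (if u = v then 1 else 0)"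
    using inv_exists[OF fin, of Mf] inj by blast
  define Pi where "Pi u v = (if u = v then 1 else 0) - 1 / n" for u v :: nat
  have Pi_left: "(\<Sum>w\<in>V. Pi u w * f w) = f u - (\<Sum>w\<in>V. f w) / n" if "u \<in> V" for u f
  proof -
    have "(\<Sum>w\<in>V. Pi u w * f w) = (\<Sum>w\<in>V. (if u = w then f w else 0)) - (\<Sum>w\<in>V. f w / n)"
      unfolding sum_subtractf[symmetric] by (rule sum.cong) (auto simp: Pi_def left_diff_distrib)
    then show ?thesis using that fin by (simp add: sum_divide_distrib)
  qed
  have Pi_right: "(\<Sum>w\<in>V. f w * Pi w v) = f v - (\<Sum>w\<in>V. f w) / n" if "v \<in> V" for v f
  proof -
    have "(\<Sum>w\<in>V. f w * Pi w v) = (\<Sum>w\<in>V. (if w = v then f w else 0)) - (\<Sum>w\<in>V. f w / n)"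
      unfolding sum_subtractf[symmetric] by (rule sum.cong) (auto simp: Pi_def right_diff_distrib)
    then show ?thesis using that fin by (simp add: sum_divide_distrib)
  qed
  have Bcol: "(\<Sum>u\<in>V. Bf u v) = 1" if v: "v \<in> V" for v
  proof -
    have "(\<Sum>u\<in>V. \<Sum>w\<in>V. Mf u w * Bf w v) = (\<Sum>u\<in>V. (if u = v then 1 else 0))"
      using B1 v by (intro sum.cong) auto
    also have "\<dots> = 1" using v fin by simp
    finally have 1: "(\<Sum>u\<in>V. \<Sum>w\<in>V. Mf u w * Bf w v) = 1" .
    have "(\<Sum>u\<in>V. \<Sum>w\<in>V. Mf u w * Bf w v) = (\<Sum>w\<in>V. (\<Sum>u\<in>V. Mf u w) * Bf w v)"
      by (subst sum.swap) (simp add: sum_distrib_right)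
    also have "\<dots> = (\<Sum>w\<in>V. Bf w v)"
    proof (rule sum.cong)
      fix w assume w: "w \<in> V"
      have "(\<Sum>u\<in>V. Mf u w) = (\<Sum>u\<in>V. L u w) + n * (1 / n)"
        by (simp add: Mf_def sum.distrib n_def)
      also have "\<dots> = 1" using cols w npos by simp
      finally show "(\<Sum>u\<in>V. Mf u w) * Bf w v = Bf w v" by simp
    qed simp
    finally show ?thesis using 1 by linarith
  qed
  have Brow: "(\<Sum>v\<in>V. Bf u v) = 1" if u: "u \<in> V" for u
  proof -
    have "(\<Sum>v\<in>V. \<Sum>w\<in>V. Bf u w * Mf w v) = (\<Sum>v\<in>V. (if u = v then 1 else 0))"
      using B2 u by (intro sum.cong) auto
    also have "\<dots> = 1" using u fin by simp
    finally have 1: "(\<Sum>v\<in>V. \<Sum>w\<in>V. Bf u w * Mf w v) = 1" .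
    have "(\<Sum>v\<in>V. \<Sum>w\<in>V. Bf u w * Mf w v) = (\<Sum>w\<in>V. Bf u w * (\<Sum>v\<in>V. Mf w v))"
      by (subst sum.swap) (simp add: sum_distrib_left)
    also have "\<dots> = (\<Sum>w\<in>V. Bf u w)"
    proof (rule sum.cong)
      fix w assume w: "w \<in> V"
      have "(\<Sum>v\<in>V. Mf w v) = (\<Sum>v\<in>V. L w v) + n * (1 / n)"
        by (simp add: Mf_def sum.distrib n_def)
      also have "\<dots> = 1" using rows w npos by simp
      finally show "Bf u w * (\<Sum>v\<in>V. Mf w v) = Bf u w" by simp
    qed simp
    finally show ?thesis using 1 by linarith
  qed
  define X where "X u v = (if u \<in> V \<and> v \<in> V then Bf u v - 1 / n else 0)" for u v
  have LX: "mmul V L X u v = Pi u v" if u: "u \<in> V" and v: "v \<in> V" for u v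
  proof -
    have "mmul V L X u v = (\<Sum>w\<in>V. L u w * Bf w v) - (\<Sum>w\<in>V. L u w) / n"
      unfolding mmul_def X_def using v
      by (simp add: right_diff_distrib sum_subtractf sum_divide_distrib)
    also have "\<dots> = (\<Sum>w\<in>V. L u w * Bf w v)" using rows u by simp
    also have "\<dots> = (\<Sum>w\<in>V. Mf u w * Bf w v) - (\<Sum>w\<in>V. Bf w v) / n"
      unfolding Mf_def by (simp add: distrib_right sum.distrib sum_divide_distrib)
    also have "\<dots> = Pi u v" using B1 u v Bcol[OF v] by (simp add: Pi_def)
    finally show ?thesis .
  qed
  have XL: "mmul V X L u v = Pi u v" if u: "u \<in> V" and v: "v \<in> V" for u v
  proof -
    have "mmul V X L u v = (\<Sum>w\<in>V. Bf u w * L w v) - (\<Sum>w\<in>V. L w v) / n"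
      unfolding mmul_def X_def using u
      by (simp add: left_diff_distrib sum_subtractf sum_divide_distrib)
    also have "\<dots> = (\<Sum>w\<in>V. Bf u w * L w v)" using cols v by simp
    also have "\<dots> = (\<Sum>w\<in>V. Bf u w * Mf w v) - (\<Sum>w\<in>V. Bf u w) / n"
      unfolding Mf_def by (simp add: distrib_left sum.distrib sum_divide_distrib)
    also have "\<dots> = Pi u v" using B2 u v Brow[OF u] by (simp add: Pi_def)
    finally show ?thesis .
  qed
  have Xcol: "(\<Sum>w\<in>V. X w v) = 0" if v: "v \<in> V" for v
  proof -
    have "(\<Sum>w\<in>V. X w v) = (\<Sum>w\<in>V. Bf w v) - n * (1 / n)"
      unfolding X_def using v by (simp add: sum_subtractf n_def)
    then show ?thesis using Bcol[OF v] npos by simp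
  qed
  have Lcol0: "(\<Sum>w\<in>V. L w v) = 0" if "v \<in> V" for v using cols that by auto
  have pX: "is_pinv V L X"
    unfolding is_pinv_def
  proof (intro conjI ballI allI impI)
    fix i j assume "i \<notin> V \<or> j \<notin> V" then show "X i j = 0" by (auto simp: X_def)
  next
    fix i j assume i: "i \<in> V" and j: "j \<in> V"
    show "mmul V (mmul V L X) L i j = L i j"
      unfolding mmul_def[of V "mmul V L X"] using LX i Pi_left[OF i, of "\<lambda>w. L w j"] Lcol0[OF j]
      by simp
    show "mmul V (mmul V X L) X i j = X i j"
      unfolding mmul_def[of V "mmul V X L"] using XL i Pi_left[OF i, of "\<lambda>w. X w j"] Xcol[OF j]
      by (simp add: X_def)
    show "mmul V L X i j = mmul V L X j i" using LX i j by (simp add: Pi_def)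
    show "mmul V X L i j = mmul V X L j i" using XL i j by (simp add: Pi_def)
  qed
  have uniq: "Y = X" if pY: "is_pinv V L Y" for Y
  proof -
    have Y0: "\<forall>i j. (i \<notin> V \<or> j \<notin> V) \<longrightarrow> Y i j = 0"
      and Y1: "\<forall>i\<in>V. \<forall>j\<in>V. mmul V (mmul V L Y) L i j = L i j"
      and Y2: "\<forall>i\<in>V. \<forall>j\<in>V. mmul V (mmul V Y L) Y i j = Y i j"
      and Y3: "\<forall>i\<in>V. \<forall>j\<in>V. mmul V L Y i j = mmul V L Y j i"
      and Y4: "\<forall>i\<in>V. \<forall>j\<in>V. mmul V Y L i j = mmul V Y L j i"
      using pY unfolding is_pinv_def by auto
    have LY: "mmul V L Y u v = Pi u v" if u: "u \<in> V" and v: "v \<in> V" for u v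
    proof -
      have s0: "(\<Sum>w\<in>V. mmul V L Y u w) = 0"
      proof -
        have "(\<Sum>w\<in>V. mmul V L Y u w) = (\<Sum>w\<in>V. mmul V L Y w u)" using Y3 u by (intro sum.cong) auto
        also have "\<dots> = (\<Sum>z\<in>V. (\<Sum>w\<in>V. L w z) * Y z u)"
          unfolding mmul_def by (subst sum.swap) (simp add: sum_distrib_right)
        also have "\<dots> = 0" using Lcol0 by simp
        finally show ?thesis .
      qed
      have "(\<Sum>w\<in>V. mmul V L Y u w * mmul V L X w v) = (\<Sum>z\<in>V. mmul V (mmul V L Y) L u z * X z v)"
        using mmul_assoc_pt[of V "mmul V L Y" L X u v] by (simp add: mmul_def)
      also have "\<dots> = (\<Sum>z\<in>V. L u z * X z v)" using Y1 u by (intro sum.cong) auto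
      also have "\<dots> = Pi u v" using LX[OF u v] by (simp add: mmul_def)
      finally have "(\<Sum>w\<in>V. mmul V L Y u w * mmul V L X w v) = Pi u v" .
      moreover have "(\<Sum>w\<in>V. mmul V L Y u w * mmul V L X w v) = (\<Sum>w\<in>V. mmul V L Y u w * Pi w v)"
        using LX v by (intro sum.cong) auto
      ultimately show ?thesis using Pi_right[OF v, of "\<lambda>w. mmul V L Y u w"] s0 by simp
    qed
    have YL: "mmul V Y L u v = Pi u v" if u: "u \<in> V" and v: "v \<in> V" for u v
    proof -
      have s0: "(\<Sum>w\<in>V. mmul V Y L w v) = 0"
      proof -
        have "(\<Sum>w\<in>V. mmul V Y L w v) = (\<Sum>w\<in>V. mmul V Y L v w)" using Y4 v by (intro sum.cong) auto
        also have "\<dots> = (\<Sum>z\<in>V. Y v z * (\<Sum>w\<in>V. L z w))"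
          unfolding mmul_def by (subst sum.swap) (simp add: sum_distrib_left)
        also have "\<dots> = 0" using rows by simp
        finally show ?thesis .
      qed
      have "(\<Sum>w\<in>V. mmul V X L u w * mmul V Y L w v) = (\<Sum>z\<in>V. X u z * mmul V (mmul V L Y) L z v)"
        using mmul_assoc_pt[of V X L "mmul V Y L" u v]
          mmul_assoc[of V L Y L] by (simp add: mmul_def)
      also have "\<dots> = (\<Sum>z\<in>V. X u z * L z v)" using Y1 v by (intro sum.cong) auto
      also have "\<dots> = Pi u v" using XL[OF u v] by (simp add: mmul_def)
      finally have "(\<Sum>w\<in>V. mmul V X L u w * mmul V Y L w v) = Pi u v" .
      moreover have "(\<Sum>w\<in>V. mmul V X L u w * mmul V Y L w v) = (\<Sum>w\<in>V. Pi u w * mmul V Y L w v)"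
        using XL u by (intro sum.cong) auto
      ultimately show ?thesis using Pi_left[OF u, of "\<lambda>w. mmul V Y L w v"] s0 by simp
    qed
    have "Y u v = X u v" if u: "u \<in> V" and v: "v \<in> V" for u v
    proof -
      have "(\<Sum>w\<in>V. mmul V X L u w * Y w v) = (\<Sum>w\<in>V. X u w * mmul V L Y w v)"
        using mmul_assoc_pt[of V X L Y u v] by (simp add: mmul_def)
      moreover have "(\<Sum>w\<in>V. mmul V X L u w * Y w v) = (\<Sum>w\<in>V. mmul V Y L u w * Y w v)"
        using XL YL u by (intro sum.cong) auto
      moreover have "(\<Sum>w\<in>V. mmul V Y L u w * Y w v) = Y u v" using Y2 u v by (simp add: mmul_def)
      moreover have "(\<Sum>w\<in>V. X u w * mmul V L Y w v) = (\<Sum>w\<in>V. X u w * mmul V L X w v)"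
        using LX LY v by (intro sum.cong) auto
      moreover have "(\<Sum>w\<in>V. X u w * mmul V L X w v) = X u v"
      proof -
        have "(\<Sum>w\<in>V. X u w * mmul V L X w v) = mmul V X (mmul V L X) u v"
          unfolding mmul_def[of V X "mmul V L X"] by simp
        also have "\<dots> = mmul V (mmul V X L) X u v" by (simp only: mmul_assoc)
        also have "\<dots> = X u v" using pX u v unfolding is_pinv_def by blast
        finally show ?thesis .
      qed
      ultimately show ?thesis by simp
    qed
    then show "Y = X" using Y0 by (intro ext) (metis X_def)
  qed
  have "pinv V L = X" unfolding pinv_def using pX uniq by (rule the_equality)
  then show ?thesis using LX by (simp add: Pi_def n_def)
qed

definition Eg :: "nat set \<Rightarrow> (nat \<Rightarrow> nat \<Rightarrow> bool) \<Rightarrow> (nat \<Rightarrow> real) \<Rightarrow> (nat \<Rightarrow> real) \<Rightarrow> real" where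
  "Eg V adj x y = (\<Sum>u\<in>V. \<Sum>v\<in>V. if adj u v then (x u - x v) * (y u - y v) else 0)"

lemma lap_row:
  assumes fin: "finite V" and irr: "\<forall>u. \<not> adj u u" and u: "u \<in> V"
  shows "(\<Sum>v\<in>V. laplacian V adj u v * y v) = (\<Sum>v\<in>V. if adj u v then y u - y v else 0)"
proof -
  have "(\<Sum>v\<in>V. laplacian V adj u v * y v)
      = (\<Sum>v\<in>V. (if v = u then real (gdeg V adj u) * y u else 0) - (if adj u v then y v else 0))"
    using u irr by (intro sum.cong) (auto simp: laplacian_def)
  also have "\<dots> = real (gdeg V adj u) * y u - (\<Sum>v\<in>V. if adj u v then y v else 0)"
    using fin u by (simp add: sum_subtractf)
  also have "real (gdeg V adj u) * y u = (\<Sum>v\<in>V. if adj u v then y u else 0)"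
    using fin by (simp add: gdeg_def sum.inter_filter[symmetric])
  also have "(\<Sum>v\<in>V. if adj u v then y u else 0) - (\<Sum>v\<in>V. if adj u v then y v else 0)
      = (\<Sum>v\<in>V. if adj u v then y u - y v else 0)"
    by (simp add: sum_subtractf[symmetric] if_distrib) (rule sum.cong, auto)
  finally show ?thesis .
qed

lemma lap_quad:
  assumes fin: "finite V" and irr: "\<forall>u. \<not> adj u u" and sym: "\<forall>u v. adj u v \<longrightarrow> adj v u"
  shows "(\<Sum>u\<in>V. x u * (\<Sum>v\<in>V. laplacian V adj u v * y v)) = Eg V adj x y / 2"
proof -
  define S where "S = (\<Sum>u\<in>V. \<Sum>v\<in>V. if adj u v then x u * (y u - y v) else 0)"
  have 1: "(\<Sum>u\<in>V. x u * (\<Sum>v\<in>V. laplacian V adj u v * y v)) = S"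
    unfolding S_def using lap_row[of V adj, OF fin irr]
    by (intro sum.cong refl) (simp add: sum_distrib_left if_distrib, intro sum.cong refl, simp)
  have "S = (\<Sum>v\<in>V. \<Sum>u\<in>V. if adj u v then x u * (y u - y v) else 0)"
    unfolding S_def by (rule sum.swap)
  also have "\<dots> = (\<Sum>u\<in>V. \<Sum>v\<in>V. if adj u v then - (x v * (y u - y v)) else 0)"
    using sym by (intro sum.cong refl) (auto simp: algebra_simps)
  finally have 2: "S = (\<Sum>u\<in>V. \<Sum>v\<in>V. if adj u v then - (x v * (y u - y v)) else 0)" .
  have "S + S = Eg V adj x y"
    apply (subst (2) 2)
    unfolding S_def Eg_def sum.distrib[symmetric]
    by (intro sum.cong refl) (auto simp: algebra_simps)
  then show ?thesis using 1 by simp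
qed

lemma Eg_nonneg: "Eg V adj x x \<ge> 0"
  unfolding Eg_def by (intro sum_nonneg) auto

lemma effres_char:
  assumes fin: "finite V" and irr: "\<forall>u. \<not> adj u u" and sym: "\<forall>u v. adj u v \<longrightarrow> adj v u"
    and conn: "\<And>x::nat\<Rightarrow>real. (\<forall>u\<in>V. \<forall>v\<in>V. adj u v \<longrightarrow> x u = x v) \<Longrightarrow> \<forall>u\<in>V. \<forall>v\<in>V. x u = x v"
    and s: "s \<in> V" and t: "t \<in> V" and st: "s \<noteq> t"
  shows "\<exists>\<phi>. eff_res V adj s t = Eg V adj \<phi> \<phi> / 2 \<and> (\<forall>\<psi>. \<psi> s - \<psi> t = Eg V adj \<psi> \<phi> / 2)"
proof -
  define L where "L = laplacian V adj"
  have ne: "V \<noteq> {}" using s by auto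
  have symL: "\<forall>i\<in>V. \<forall>j\<in>V. L i j = L j i"
    using sym by (auto simp: L_def laplacian_def)
  have rows: "\<forall>i\<in>V. (\<Sum>j\<in>V. L i j) = 0"
  proof
    fix i assume i: "i \<in> V"
    have "(\<Sum>j\<in>V. L i j) = (\<Sum>j\<in>V. laplacian V adj i j * 1)" by (simp add: L_def)
    also have "\<dots> = (\<Sum>v\<in>V. if adj i v then (1::real) - 1 else 0)"
      using lap_row[of V adj i "\<lambda>_. 1", OF fin irr i] by simp
    also have "\<dots> = 0" by (rule sum.neutral) simp
    finally show "(\<Sum>j\<in>V. L i j) = 0" .
  qed
  have ker: "\<forall>u\<in>V. \<forall>v\<in>V. x u = x v" if hx: "\<forall>u\<in>V. (\<Sum>w\<in>V. L u w * x w) = 0" for x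
  proof (rule conn)
    have "Eg V adj x x = 0"
      using lap_quad[of V adj x x, OF fin irr sym] hx by (simp add: L_def)
    then have "\<forall>u\<in>V. (\<Sum>v\<in>V. if adj u v then (x u - x v) * (x u - x v) else 0) = 0"
      unfolding Eg_def using fin by (subst (asm) sum_nonneg_eq_0_iff) (auto intro!: sum_nonneg)
    then have "\<forall>u\<in>V. \<forall>v\<in>V. (if adj u v then (x u - x v) * (x u - x v) else 0) = 0"
      using fin by (subst (asm) sum_nonneg_eq_0_iff) auto
    then show "\<forall>u\<in>V. \<forall>v\<in>V. adj u v \<longrightarrow> x u = x v" by (metis mult_eq_0_iff right_minus_eq)
  qed
  have LP: "\<forall>u\<in>V. \<forall>v\<in>V. mmul V L (pinv V L) u v = (if u = v then 1 else 0) - 1 / real (card V)"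
    by (rule pinv_LP[OF fin ne symL rows ker])
  define b where "b u = (if u = s then 1 else 0) - (if u = t then 1 else 0 :: real)" for u
  define P where "P = pinv V L"
  define \<phi> where "\<phi> w = (\<Sum>v\<in>V. P w v * b v)" for w
  have sb: "(\<Sum>v\<in>V. b v) = 0" using fin s t st by (simp add: b_def sum_subtractf)
  have Lphi: "(\<Sum>w\<in>V. L u w * \<phi> w) = b u" if u: "u \<in> V" for u
  proof -
    have "(\<Sum>w\<in>V. L u w * \<phi> w) = (\<Sum>v\<in>V. mmul V L P u v * b v)"
    proof -
      have "(\<Sum>w\<in>V. L u w * \<phi> w) = (\<Sum>w\<in>V. \<Sum>v\<in>V. L u w * P w v * b v)"
        unfolding \<phi>_def by (simp add: sum_distrib_left mult.assoc)
      also have "\<dots> = (\<Sum>v\<in>V. \<Sum>w\<in>V. L u w * P w v * b v)" by (rule sum.swap)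
      also have "\<dots> = (\<Sum>v\<in>V. mmul V L P u v * b v)"
        unfolding mmul_def by (simp add: sum_distrib_right)
      finally show ?thesis .
    qed
    also have "\<dots> = (\<Sum>v\<in>V. (if v = u then b v else 0) - b v / real (card V))"
    proof (rule sum.cong[OF refl])
      fix v assume v: "v \<in> V"
      have e: "mmul V L P u v = (if u = v then 1 else 0) - 1 / real (card V)"
        using LP u v unfolding P_def by blast
      show "mmul V L P u v * b v = (if v = u then b v else 0) - b v / real (card V)"
        unfolding e by (cases "u = v") (auto simp: left_diff_distrib)
    qed
    also have "\<dots> = b u" using u fin sb by (simp add: sum_subtractf sum_divide_distrib[symmetric])
    finally show ?thesis .
  qed
  have key: "(\<Sum>u\<in>V. \<psi> u * b u) = Eg V adj \<psi> \<phi> / 2" for \<psi>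
  proof -
    have "(\<Sum>u\<in>V. \<psi> u * b u) = (\<Sum>u\<in>V. \<psi> u * (\<Sum>w\<in>V. L u w * \<phi> w))"
      using Lphi by simp
    then show ?thesis using lap_quad[of V adj \<psi> \<phi>, OF fin irr sym] by (simp add: L_def)
  qed
  have psb: "(\<Sum>u\<in>V. \<psi> u * b u) = \<psi> s - \<psi> t" for \<psi>
  proof -
    have "(\<Sum>u\<in>V. \<psi> u * b u) = (\<Sum>u\<in>V. (if u = s then \<psi> u else 0) - (if u = t then \<psi> u else 0))"
      using st by (intro sum.cong refl) (auto simp: b_def)
    then show ?thesis using fin s t by (simp add: sum_subtractf)
  qed
  have "eff_res V adj s t = (\<Sum>u\<in>V. \<phi> u * b u)"
    unfolding eff_res_def Let_def \<phi>_def P_def L_def[symmetric] b_def[symmetric]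
    by (simp add: sum_distrib_left sum_distrib_right mult.commute mult.left_commute)
  then have "eff_res V adj s t = Eg V adj \<phi> \<phi> / 2" using key by simp
  moreover have "\<forall>\<psi>. \<psi> s - \<psi> t = Eg V adj \<psi> \<phi> / 2" using key psb by simp
  ultimately show ?thesis by blast
qed

definition Qf :: "nat set \<Rightarrow> (nat \<Rightarrow> nat \<Rightarrow> bool) \<Rightarrow> (nat \<Rightarrow> real) \<Rightarrow> real" where
  "Qf S E y = (\<Sum>u\<in>S. \<Sum>v\<in>S. if E u v then (y u - y v)^2 else 0)"

lemma Eg_constr:
  assumes f1: "finite S1" and f2: "finite S2" and dis: "S1 \<inter> S2 = {}" and st: "s \<noteq> t"
    and sn: "s \<notin> S1 \<union> S2" and tn: "t \<notin> S1 \<union> S2"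
    and Ein: "\<forall>u v. E u v \<longrightarrow> u \<in> S1 \<and> v \<in> S1"
    and N1: "N1 \<subseteq> S1" and N2: "N2 \<subseteq> S2"
  shows "Eg (S1 \<union> S2 \<union> {s, t}) (constr_adj S1 S2 E s t N1 N2) x x
     = 2 * (\<Sum>w\<in>N1 \<union> N2. (x s - x w)^2) + 2 * (\<Sum>w\<in>S1 \<union> S2. (x t - x w)^2) + Qf S1 E x"
proof -
  define W where "W = S1 \<union> S2"
  define N where "N = N1 \<union> N2"
  define adj where "adj = constr_adj S1 S2 E s t N1 N2"
  have fW: "finite W" using f1 f2 by (simp add: W_def)
  have NW: "N \<subseteq> W" using N1 N2 by (auto simp: N_def W_def)
  have fN: "finite N" using NW fW finite_subset by blast
  have V: "S1 \<union> S2 \<union> {s, t} = insert s (insert t W)" by (auto simp: W_def)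
  have sW: "s \<notin> W" and tW: "t \<notin> W" using sn tn by (auto simp: W_def)
  define f where "f u v = (if adj u v then (x u - x v) * (x u - x v) else 0)" for u v
  have fss: "f s s = 0" "f t t = 0" "f s t = 0" "f t s = 0"
    using st sW tW NW by (auto simp: f_def adj_def constr_adj_def N_def W_def)
  have g: "(\<Sum>v\<in>insert s (insert t W). f u v) = f u s + f u t + (\<Sum>v\<in>W. f u v)" for u
    using fW sW tW st by simp
  have gs: "(\<Sum>v\<in>W. f s v) = (\<Sum>w\<in>N. (x s - x w)^2)"
  proof -
    have "(\<Sum>v\<in>W. f s v) = (\<Sum>v\<in>W. if v \<in> N then (x s - x v)^2 else 0)"
      using sW tW st Ein by (intro sum.cong refl) (auto simp: f_def adj_def constr_adj_def N_def W_def power2_eq_square)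
    also have "\<dots> = (\<Sum>w\<in>W \<inter> N. (x s - x w)^2)" using fW by (simp add: sum.inter_restrict)
    also have "W \<inter> N = N" using NW by blast
    finally show ?thesis .
  qed
  have gt: "(\<Sum>v\<in>W. f t v) = (\<Sum>w\<in>W. (x t - x w)^2)"
    using sW tW st by (intro sum.cong refl) (auto simp: f_def adj_def constr_adj_def W_def power2_eq_square)
  have gu: "f u s + f u t + (\<Sum>v\<in>W. f u v) = (if u \<in> N then (x s - x u)^2 else 0) + (x t - x u)^2
            + (\<Sum>v\<in>S1. if E u v then (x u - x v)^2 else 0)" if u: "u \<in> W" for u
  proof -
    have 1: "f u s = (if u \<in> N then (x s - x u)^2 else 0)"
      using u sW tW st Ein by (auto simp: f_def adj_def constr_adj_def N_def W_def power2_eq_square algebra_simps)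
    have 2: "f u t = (x t - x u)^2"
      using u sW tW st Ein by (auto simp: f_def adj_def constr_adj_def N_def W_def power2_eq_square algebra_simps)
    have "(\<Sum>v\<in>W. f u v) = (\<Sum>v\<in>W. if v \<in> S1 then (if E u v then (x u - x v)^2 else 0) else 0)"
      using u sW tW st Ein by (intro sum.cong refl) (auto simp: f_def adj_def constr_adj_def W_def power2_eq_square)
    also have "\<dots> = (\<Sum>v\<in>W \<inter> S1. if E u v then (x u - x v)^2 else 0)"
      using fW by (simp add: sum.inter_restrict)
    also have "W \<inter> S1 = S1" by (auto simp: W_def)
    finally show ?thesis using 1 2 by simp
  qed
  have EgV: "Eg (S1 \<union> S2 \<union> {s, t}) adj x x = (\<Sum>u\<in>insert s (insert t W). \<Sum>v\<in>insert s (insert t W). f u v)"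
    unfolding Eg_def V f_def ..
  also have "\<dots> = (\<Sum>w\<in>N. (x s - x w)^2) + (\<Sum>w\<in>W. (x t - x w)^2)
       + (\<Sum>u\<in>W. (if u \<in> N then (x s - x u)^2 else 0) + (x t - x u)^2
            + (\<Sum>v\<in>S1. if E u v then (x u - x v)^2 else 0))"
    using fW sW tW st fss gs gt gu by (simp add: g)
  also have "(\<Sum>u\<in>W. (if u \<in> N then (x s - x u)^2 else 0) + (x t - x u)^2
            + (\<Sum>v\<in>S1. if E u v then (x u - x v)^2 else 0))
      = (\<Sum>u\<in>W. (if u \<in> N then (x s - x u)^2 else 0)) + (\<Sum>u\<in>W. (x t - x u)^2)
            + (\<Sum>u\<in>W. (\<Sum>v\<in>S1. if E u v then (x u - x v)^2 else 0))"
    by (simp add: sum.distrib)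
  also have "(\<Sum>u\<in>W. (if u \<in> N then (x s - x u)^2 else 0)) = (\<Sum>u\<in>N. (x s - x u)^2)"
    using fW NW by (simp add: sum.inter_restrict[symmetric] Int_absorb1)
  also have "(\<Sum>u\<in>W. (\<Sum>v\<in>S1. if E u v then (x u - x v)^2 else 0))
      = (\<Sum>u\<in>W. if u \<in> S1 then (\<Sum>v\<in>S1. if E u v then (x u - x v)^2 else 0) else 0)"
    using Ein by (intro sum.cong refl) (auto intro!: sum.neutral)
  also have "\<dots> = Qf S1 E x"
    using fW by (simp add: sum.inter_restrict[symmetric] Qf_def W_def Int_absorb1)
  finally show ?thesis by (simp add: adj_def N_def W_def)
qed

lemma quad_norm_lap:
  assumes fin: "finite S" and Ein: "\<forall>u v. E u v \<longrightarrow> u \<in> S \<and> v \<in> S"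
    and sym: "\<forall>u v. E u v \<longrightarrow> E v u" and irr: "\<forall>u. \<not> E u u"
    and reg: "\<forall>u\<in>S. card {v \<in> S. E u v} = d" and dpos: "d > 0"
  shows "(\<Sum>u\<in>S. \<Sum>v\<in>S. f u * norm_laplacian S E u v * f v) = Qf S E f / (2 * real d)"
proof -
  define T where "T = (\<Sum>u\<in>S. \<Sum>v\<in>S. if E u v then f u * f v else 0)"
  have gd: "gdeg S E u = d" if "u \<in> S" for u using reg that by (simp add: gdeg_def)
  have dd: "sqrt (real d * real d) = real d" by simp
  have "(\<Sum>u\<in>S. \<Sum>v\<in>S. f u * norm_laplacian S E u v * f v)
      = (\<Sum>u\<in>S. \<Sum>v\<in>S. (if v = u then (f u)^2 else 0) - (if E u v then f u * f v / real d else 0))"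
    using dpos irr by (intro sum.cong refl) (auto simp: norm_laplacian_def gd dd power2_eq_square algebra_simps)
  also have "\<dots> = (\<Sum>u\<in>S. (f u)^2) - T / real d"
    using fin by (simp add: sum_subtractf T_def sum_divide_distrib if_distrib[of "\<lambda>x. x / real d"] cong: if_cong)
  finally have 1: "(\<Sum>u\<in>S. \<Sum>v\<in>S. f u * norm_laplacian S E u v * f v) = (\<Sum>u\<in>S. (f u)^2) - T / real d" .
  have A: "(\<Sum>u\<in>S. \<Sum>v\<in>S. if E u v then (f u)^2 else 0) = real d * (\<Sum>u\<in>S. (f u)^2)"
  proof -
    have "(\<Sum>u\<in>S. \<Sum>v\<in>S. if E u v then (f u)^2 else 0) = (\<Sum>u\<in>S. real d * (f u)^2)"
    proof (rule sum.cong[OF refl])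
      fix u assume u: "u \<in> S"
      have "(\<Sum>v\<in>S. if E u v then (f u)^2 else 0) = real (card {v \<in> S. E u v}) * (f u)^2"
        using fin by (simp add: sum.inter_filter[symmetric])
      then show "(\<Sum>v\<in>S. if E u v then (f u)^2 else 0) = real d * (f u)^2" using reg u by simp
    qed
    then show ?thesis by (simp add: sum_distrib_left)
  qed
  have B: "(\<Sum>u\<in>S. \<Sum>v\<in>S. if E u v then (f v)^2 else 0) = real d * (\<Sum>u\<in>S. (f u)^2)"
  proof -
    have "(\<Sum>u\<in>S. \<Sum>v\<in>S. if E u v then (f v)^2 else 0) = (\<Sum>v\<in>S. \<Sum>u\<in>S. if E u v then (f v)^2 else 0)"
      by (rule sum.swap)
    also have "\<dots> = (\<Sum>v\<in>S. \<Sum>u\<in>S. if E v u then (f v)^2 else 0)"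
      using sym by (intro sum.cong refl) auto
    finally show ?thesis using A by simp
  qed
  have "Qf S E f = (\<Sum>u\<in>S. \<Sum>v\<in>S. (if E u v then (f u)^2 else 0) + (if E u v then (f v)^2 else 0)
                      - 2 * (if E u v then f u * f v else 0))"
    unfolding Qf_def by (intro sum.cong refl) (auto simp: power2_eq_square algebra_simps)
  also have "\<dots> = 2 * real d * (\<Sum>u\<in>S. (f u)^2) - 2 * T"
    using A B by (simp add: sum.distrib sum_subtractf sum_distrib_left T_def mult.assoc)
  finally have 2: "Qf S E f = 2 * real d * (\<Sum>u\<in>S. (f u)^2) - 2 * T" .
  show ?thesis using 1 2 dpos by (simp add: field_simps)
qed

lemma Qf_nonneg: "Qf S E f \<ge> 0" unfolding Qf_def by (intro sum_nonneg) auto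

lemma gap_use:
  assumes fin: "finite S" and Ein: "\<forall>u v. E u v \<longrightarrow> u \<in> S \<and> v \<in> S"
    and sym: "\<forall>u v. E u v \<longrightarrow> E v u" and irr: "\<forall>u. \<not> E u u"
    and reg: "\<forall>u\<in>S. card {v \<in> S. E u v} = d" and dpos: "d > 0"
    and gap: "spectral_gap S E \<ge> \<gamma>"
    and g0: "(\<Sum>u\<in>S. g u) = 0"
  shows "Qf S E g / 2 \<ge> real d * \<gamma> * (\<Sum>u\<in>S. (g u)^2)"
proof (cases "\<exists>u\<in>S. g u \<noteq> 0")
  case False
  then have "Qf S E g = 0" unfolding Qf_def by (intro sum.neutral ballI) auto
  moreover have "(\<Sum>u\<in>S. (g u)^2) = 0" using False by simp
  ultimately show ?thesis by simp
next
  case True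
  define R where "R f = (\<Sum>u\<in>S. \<Sum>v\<in>S. f u * norm_laplacian S E u v * f v) / (\<Sum>u\<in>S. (f u)^2)" for f
  define Set where "Set = {(\<Sum>u\<in>S. \<Sum>v\<in>S. f u * norm_laplacian S E u v * f v) / (\<Sum>u\<in>S. (f u)^2) | f.
        (\<exists>u\<in>S. f u \<noteq> 0) \<and> (\<Sum>u\<in>S. sqrt (real (gdeg S E u)) * f u) = 0}"
  have sg: "spectral_gap S E = Inf Set" unfolding spectral_gap_def Set_def ..
  have gd: "gdeg S E u = d" if "u \<in> S" for u using reg that by (simp add: gdeg_def)
  have "(\<Sum>u\<in>S. sqrt (real (gdeg S E u)) * g u) = sqrt (real d) * (\<Sum>u\<in>S. g u)"
    by (simp add: gd sum_distrib_left)
  then have "R g \<in> Set" using True g0 unfolding Set_def R_def by auto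
  moreover have "bdd_below Set"
  proof (rule bdd_belowI)
    fix r assume "r \<in> Set"
    then obtain f where "r = (\<Sum>u\<in>S. \<Sum>v\<in>S. f u * norm_laplacian S E u v * f v) / (\<Sum>u\<in>S. (f u)^2)"
      unfolding Set_def by auto
    then show "0 \<le> r" using quad_norm_lap[OF fin Ein sym irr reg dpos, of f] Qf_nonneg[of S E f]
      by (simp add: sum_nonneg)
  qed
  ultimately have "spectral_gap S E \<le> R g" unfolding sg by (rule cInf_lower)
  then have le: "\<gamma> \<le> R g" using gap by simp
  have pos: "(\<Sum>u\<in>S. (g u)^2) > 0"
    using True fin by (metis (no_types, lifting) power2_less_eq_zero_iff not_less sum_pos2 zero_le_power2 zero_less_power2)
  have Rg: "R g = Qf S E g / (2 * real d) / (\<Sum>u\<in>S. (g u)^2)"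
    unfolding R_def using quad_norm_lap[OF fin Ein sym irr reg dpos, of g] by simp
  have "\<gamma> * (\<Sum>u\<in>S. (g u)^2) \<le> R g * (\<Sum>u\<in>S. (g u)^2)"
    using le pos by (intro mult_right_mono) auto
  also have "R g * (\<Sum>u\<in>S. (g u)^2) = Qf S E g / (2 * real d)"
    using Rg pos by simp
  finally have "\<gamma> * (\<Sum>u\<in>S. (g u)^2) \<le> Qf S E g / (2 * real d)" .
  then show ?thesis using dpos by (simp add: field_simps)
qed

lemma S1_ineq:
  assumes fin: "finite S" and Ein: "\<forall>u v. E u v \<longrightarrow> u \<in> S \<and> v \<in> S"
    and sym: "\<forall>u v. E u v \<longrightarrow> E v u" and irr: "\<forall>u. \<not> E u u"
    and reg: "\<forall>u\<in>S. card {v \<in> S. E u v} = d" and dpos: "d > 0"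
    and gap: "spectral_gap S E \<ge> \<gamma>"
    and N: "N \<subseteq> S" and c0: "c \<ge> 0"
    and c1: "2 * c * real (card N) \<le> real (card S)" and c2: "2 * c \<le> real d * \<gamma>"
  shows "(\<Sum>u\<in>S. (y u)^2) + Qf S E y / 2 \<ge> c * (\<Sum>u\<in>N. (y u)^2)"
proof -
  define n where "n = real (card S)"
  define \<mu> where "\<mu> = (\<Sum>u\<in>S. y u) / n"
  define g where "g u = y u - \<mu>" for u
  have fN: "finite N" using N fin finite_subset by blast
  show ?thesis
  proof (cases "S = {}")
    case True
    then have "N = {}" using N by auto
    then show ?thesis using True by (simp add: Qf_def)
  next
    case False
    then have npos: "n > 0" using fin by (simp add: n_def card_gt_0_iff)
    have g0: "(\<Sum>u\<in>S. g u) = 0"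
      using npos by (simp add: g_def sum_subtractf \<mu>_def n_def)
    have Qg: "Qf S E g = Qf S E y" unfolding Qf_def g_def by (intro sum.cong refl) (auto simp: algebra_simps)
    have gapg: "Qf S E g / 2 \<ge> real d * \<gamma> * (\<Sum>u\<in>S. (g u)^2)"
      by (rule gap_use[OF fin Ein sym irr reg dpos gap g0])
    have sy: "(\<Sum>u\<in>S. (y u)^2) = n * \<mu>^2 + (\<Sum>u\<in>S. (g u)^2)"
    proof -
      have "(\<Sum>u\<in>S. (y u)^2) = (\<Sum>u\<in>S. \<mu>^2 + 2 * \<mu> * g u + (g u)^2)"
        by (intro sum.cong refl) (simp add: g_def power2_eq_square algebra_simps)
      also have "\<dots> = n * \<mu>^2 + 2 * \<mu> * (\<Sum>u\<in>S. g u) + (\<Sum>u\<in>S. (g u)^2)"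
        by (simp add: sum.distrib sum_distrib_left n_def)
      finally show ?thesis using g0 by simp
    qed
    have sN: "(\<Sum>u\<in>N. (y u)^2) \<le> 2 * real (card N) * \<mu>^2 + 2 * (\<Sum>u\<in>S. (g u)^2)"
    proof -
      have "(\<Sum>u\<in>N. (y u)^2) \<le> (\<Sum>u\<in>N. 2 * \<mu>^2 + 2 * (g u)^2)"
      proof (rule sum_mono)
        fix u
        have "0 \<le> (\<mu> - g u)^2" by simp
        then show "(y u)^2 \<le> 2 * \<mu>^2 + 2 * (g u)^2"
          by (simp add: g_def power2_eq_square algebra_simps)
      qed
      also have "\<dots> = 2 * real (card N) * \<mu>^2 + 2 * (\<Sum>u\<in>N. (g u)^2)"
        by (simp add: sum.distrib sum_distrib_left)
      also have "(\<Sum>u\<in>N. (g u)^2) \<le> (\<Sum>u\<in>S. (g u)^2)"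
        by (rule sum_mono2[OF fin N]) simp
      finally show ?thesis by simp
    qed
    have "c * (\<Sum>u\<in>N. (y u)^2) \<le> c * (2 * real (card N) * \<mu>^2 + 2 * (\<Sum>u\<in>S. (g u)^2))"
      using sN c0 by (rule mult_left_mono)
    also have "\<dots> = (2 * c * real (card N)) * \<mu>^2 + (2 * c) * (\<Sum>u\<in>S. (g u)^2)"
      by (simp add: algebra_simps)
    also have "\<dots> \<le> n * \<mu>^2 + (real d * \<gamma>) * (\<Sum>u\<in>S. (g u)^2)"
      using c1 c2 by (intro add_mono mult_right_mono) (auto simp: n_def sum_nonneg)
    also have "\<dots> \<le> (\<Sum>u\<in>S. (y u)^2) + Qf S E y / 2"
    proof -
      have "(\<Sum>u\<in>S. (g u)^2) \<ge> 0" by (simp add: sum_nonneg)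
      then show ?thesis using sy gapg Qg by linarith
    qed
    finally show ?thesis .
  qed
qed

lemma quad_min: "(c::real) \<ge> 0 \<Longrightarrow> (a - z)^2 + c * z^2 \<ge> c / (1 + c) * a^2"
proof -
  assume c: "c \<ge> 0"
  have "(1 + c) * ((a - z)^2 + c * z^2) - c * a^2 = ((1 + c) * z - a)^2"
    by (simp add: power2_eq_square algebra_simps)
  then have "(1 + c) * ((a - z)^2 + c * z^2) \<ge> c * a^2" by (metis diff_ge_0_iff_ge zero_le_power2)
  then show ?thesis using c by (simp add: field_simps)
qed

lemma Eg_expand:
  "Eg V adj (\<lambda>u. l * x u - y u) (\<lambda>u. l * x u - y u)
     = l^2 * Eg V adj x x - 2 * l * Eg V adj x y + Eg V adj y y"
proof -
  have "Eg V adj (\<lambda>u. l * x u - y u) (\<lambda>u. l * x u - y u)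
     = (\<Sum>u\<in>V. \<Sum>v\<in>V. l^2 * (if adj u v then (x u - x v) * (x u - x v) else 0)
          - 2 * l * (if adj u v then (x u - x v) * (y u - y v) else 0)
          + (if adj u v then (y u - y v) * (y u - y v) else 0))"
    unfolding Eg_def
  proof (intro sum.cong refl)
    fix u v
    show "(if adj u v then (l * x u - y u - (l * x v - y v)) * (l * x u - y u - (l * x v - y v)) else 0) =
      l^2 * (if adj u v then (x u - x v) * (x u - x v) else 0)
          - 2 * l * (if adj u v then (x u - x v) * (y u - y v) else 0)
          + (if adj u v then (y u - y v) * (y u - y v) else 0)"
      by (cases "adj u v") (simp_all add: power2_eq_square algebra_simps)
  qed
  also have "\<dots> = l^2 * Eg V adj x x - 2 * l * Eg V adj x y + Eg V adj y y"
    unfolding Eg_def by (simp add: sum.distrib sum_subtractf sum_distrib_left)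
  finally show ?thesis .
qed

lemma constr_props:
  assumes sn: "s \<notin> S1 \<union> S2" and tn: "t \<notin> S1 \<union> S2" and st: "s \<noteq> t"
    and Ein: "\<forall>u v. E u v \<longrightarrow> u \<in> S1 \<and> v \<in> S1"
    and sym: "\<forall>u v. E u v \<longrightarrow> E v u" and irr: "\<forall>u. \<not> E u u"
    and N: "N1 \<union> N2 \<subseteq> S1 \<union> S2" and Nne: "N1 \<union> N2 \<noteq> {}"
  shows "\<forall>u. \<not> constr_adj S1 S2 E s t N1 N2 u u"
    and "\<forall>u v. constr_adj S1 S2 E s t N1 N2 u v \<longrightarrow> constr_adj S1 S2 E s t N1 N2 v u"
    and "\<And>x::nat\<Rightarrow>real. (\<forall>u\<in>S1 \<union> S2 \<union> {s, t}. \<forall>v\<in>S1 \<union> S2 \<union> {s, t}. constr_adj S1 S2 E s t N1 N2 u v \<longrightarrow> x u = x v)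
          \<Longrightarrow> \<forall>u\<in>S1 \<union> S2 \<union> {s, t}. \<forall>v\<in>S1 \<union> S2 \<union> {s, t}. x u = x v"
proof -
  show "\<forall>u. \<not> constr_adj S1 S2 E s t N1 N2 u u"
    using sn tn N irr by (auto simp: constr_adj_def)
  show "\<forall>u v. constr_adj S1 S2 E s t N1 N2 u v \<longrightarrow> constr_adj S1 S2 E s t N1 N2 v u"
    using sym by (auto simp: constr_adj_def)
  fix x :: "nat \<Rightarrow> real"
  assume h: "\<forall>u\<in>S1 \<union> S2 \<union> {s, t}. \<forall>v\<in>S1 \<union> S2 \<union> {s, t}. constr_adj S1 S2 E s t N1 N2 u v \<longrightarrow> x u = x v"
  have xt: "x u = x t" if u: "u \<in> S1 \<union> S2" for u
  proof -
    have a: "constr_adj S1 S2 E s t N1 N2 u t" using u by (simp add: constr_adj_def)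
    have "u \<in> S1 \<union> S2 \<union> {s, t}" "t \<in> S1 \<union> S2 \<union> {s, t}" using u by auto
    then show ?thesis using h a by blast
  qed
  obtain w where w: "w \<in> N1 \<union> N2" using Nne by auto
  have wS: "w \<in> S1 \<union> S2" using w N by auto
  have a: "constr_adj S1 S2 E s t N1 N2 s w" using w unfolding constr_adj_def by blast
  have "s \<in> S1 \<union> S2 \<union> {s, t}" "w \<in> S1 \<union> S2 \<union> {s, t}" using wS by auto
  then have "x s = x w" using h a by blast
  then have xs: "x s = x t" using xt wS by simp
  have "x u = x t" if "u \<in> S1 \<union> S2 \<union> {s, t}" for u using that xt xs by auto
  then show "\<forall>u\<in>S1 \<union> S2 \<union> {s, t}. \<forall>v\<in>S1 \<union> S2 \<union> {s, t}. x u = x v" by metis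
qed

theorem lemma5p2:
  fixes \<gamma> :: real
  assumes "\<gamma> > 0"
  shows "\<exists>C>0. \<forall>(S1::nat set) (S2::nat set) (E::nat \<Rightarrow> nat \<Rightarrow> bool) (s::nat) (t::nat)
      (\<epsilon>::real) (d::nat) (ds::nat) (n1::nat) (n2::nat) (k::nat) (N1::nat set) (N1'::nat set) (N2'::nat set).
      finite S1 \<and> finite S2 \<and> S1 \<inter> S2 = {} \<and> s \<noteq> t \<and>
      s \<notin> S1 \<union> S2 \<and> t \<notin> S1 \<union> S2 \<and>
      card S1 = n1 \<and> card S2 = n2 \<and> n2 \<le> n1 \<and>
      (\<forall>u v. E u v \<longrightarrow> u \<in> S1 \<and> v \<in> S1) \<and>
      (\<forall>u v. E u v \<longrightarrow> E v u) \<and> (\<forall>u. \<not> E u u) \<and>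
      (\<forall>u\<in>S1. card {v \<in> S1. E u v} = d) \<and>
      spectral_gap S1 E \<ge> \<gamma> \<and>
      0 < \<epsilon> \<and> \<epsilon> < 1 \<and>
      real d \<ge> max (real ds * ln (real n1)) ((ln (real n1))^2) \<and>
      n1 \<ge> 2 * d^3 \<and>
      \<epsilon> * real ds = real k \<and>
      real ds \<ge> C / \<epsilon> \<and>
      N1 \<subseteq> S1 \<and> card N1 = ds \<and>
      N1' \<subseteq> S1 \<and> card N1' = ds - k \<and> N2' \<subseteq> S2 \<and> card N2' = k
      \<longrightarrow>
      (let V = S1 \<union> S2 \<union> {s, t};
           r1 = eff_res V (constr_adj S1 S2 E s t N1 {}) s t;
           r2 = eff_res V (constr_adj S1 S2 E s t N1' N2') s t
       in \<bar>r1 - r2\<bar> > \<epsilon> / 4 * r1)"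
proof -
  define C where "C = 20 + 20 / \<gamma>"
  have Cpos: "C > 0" using assms by (simp add: C_def add_pos_pos)
  show ?thesis
  proof (rule exI[of _ C], intro conjI allI impI)
    show "C > 0" by (rule Cpos)
    fix S1 S2 :: "nat set" and E :: "nat \<Rightarrow> nat \<Rightarrow> bool" and s t :: nat and \<epsilon> :: real
      and d ds n1 n2 k :: nat and N1 N1' N2' :: "nat set"
    assume H: "finite S1 \<and> finite S2 \<and> S1 \<inter> S2 = {} \<and> s \<noteq> t \<and>
      s \<notin> S1 \<union> S2 \<and> t \<notin> S1 \<union> S2 \<and>
      card S1 = n1 \<and> card S2 = n2 \<and> n2 \<le> n1 \<and>
      (\<forall>u v. E u v \<longrightarrow> u \<in> S1 \<and> v \<in> S1) \<and>
      (\<forall>u v. E u v \<longrightarrow> E v u) \<and> (\<forall>u. \<not> E u u) \<and>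
      (\<forall>u\<in>S1. card {v \<in> S1. E u v} = d) \<and>
      spectral_gap S1 E \<ge> \<gamma> \<and>
      0 < \<epsilon> \<and> \<epsilon> < 1 \<and>
      real d \<ge> max (real ds * ln (real n1)) ((ln (real n1))^2) \<and>
      n1 \<ge> 2 * d^3 \<and>
      \<epsilon> * real ds = real k \<and>
      real ds \<ge> C / \<epsilon> \<and>
      N1 \<subseteq> S1 \<and> card N1 = ds \<and>
      N1' \<subseteq> S1 \<and> card N1' = ds - k \<and> N2' \<subseteq> S2 \<and> card N2' = k"
    have f1: "finite S1" and f2: "finite S2" and dis: "S1 \<inter> S2 = {}" and st: "s \<noteq> t"
      and sn: "s \<notin> S1 \<union> S2" and tn: "t \<notin> S1 \<union> S2" and cS1: "card S1 = n1"
      and Ein: "\<forall>u v. E u v \<longrightarrow> u \<in> S1 \<and> v \<in> S1"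
      and Esym: "\<forall>u v. E u v \<longrightarrow> E v u" and Eirr: "\<forall>u. \<not> E u u"
      and reg: "\<forall>u\<in>S1. card {v \<in> S1. E u v} = d"
      and gap: "spectral_gap S1 E \<ge> \<gamma>"
      and e0: "0 < \<epsilon>" and e1: "\<epsilon> < 1"
      and dmax: "real d \<ge> max (real ds * ln (real n1)) ((ln (real n1))^2)"
      and n1d: "n1 \<ge> 2 * d^3" and ek: "\<epsilon> * real ds = real k" and dsC: "real ds \<ge> C / \<epsilon>"
      and N1S: "N1 \<subseteq> S1" and cN1: "card N1 = ds"
      and N1'S: "N1' \<subseteq> S1" and cN1': "card N1' = ds - k" and N2'S: "N2' \<subseteq> S2" and cN2': "card N2' = k"
      using H by blast+
    define V where "V = S1 \<union> S2 \<union> {s, t}"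
    have finV: "finite V" using f1 f2 by (simp add: V_def)
    have sV: "s \<in> V" and tV: "t \<in> V" by (auto simp: V_def)
    have ds_n1: "ds \<le> n1" using card_mono[OF f1 N1S] cN1 cS1 by simp
    have C20: "C \<ge> 20" using assms by (simp add: C_def)
    have CeC: "C / \<epsilon> \<ge> C" using Cpos e0 e1 by (simp add: field_simps)
    have ds20: "real ds \<ge> 20" using dsC CeC C20 by linarith
    have n1_20: "real n1 \<ge> 20" using ds20 ds_n1 by linarith
    have ln1: "ln (real n1) \<ge> 1"
    proof -
      have "exp 1 \<le> real n1" using exp_le n1_20 by linarith
      then show ?thesis using n1_20 by (subst ln_ge_iff) auto
    qed
    have d_ge: "real d \<ge> real ds * ln (real n1)" using dmax by simp
    have "real ds * ln (real n1) \<ge> real ds * 1" using ln1 by (intro mult_left_mono) auto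
    then have dds: "real d \<ge> real ds" using d_ge by simp
    have dpos: "d > 0" using dds ds20 by simp
    have d1: "real d \<ge> 1" using dpos by simp
    have inv_e: "1 / \<epsilon> \<le> real ds / C"
    proof -
      have "C \<le> real ds * \<epsilon>" using dsC e0 by (simp add: field_simps)
      then show ?thesis using e0 Cpos by (simp add: field_simps)
    qed
    define c where "c = 10 / \<epsilon>"
    have c0: "c \<ge> 0" using e0 by (simp add: c_def)
    have c1: "2 * c * real (card N1) \<le> real (card S1)"
    proof -
      have "2 * c * real (card N1) = 20 * (1 / \<epsilon>) * real ds" using cN1 by (simp add: c_def)
      also have "\<dots> \<le> 20 * (real ds / C) * real ds"
        using inv_e by (intro mult_right_mono mult_left_mono) auto
      also have "\<dots> \<le> real ds * real ds"
      proof -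
        have "20 * (real ds / C) \<le> real ds" using C20 Cpos ds20 by (simp add: field_simps)
        then show ?thesis by (intro mult_right_mono) auto
      qed
      also have "\<dots> \<le> real d * real d" using dds ds20 by (intro mult_mono) auto
      also have "\<dots> \<le> real d * real d * real d" using d1 by simp
      also have "\<dots> \<le> real n1"
      proof -
        have "real (2 * d^3) \<le> real n1" using n1d by linarith
        then show ?thesis by (simp add: power3_eq_cube)
      qed
      finally show ?thesis using cS1 by simp
    qed
    have c2: "2 * c \<le> real d * \<gamma>"
    proof -
      have "20 / \<gamma> / \<epsilon> \<le> C / \<epsilon>" using e0 assms by (intro divide_right_mono) (auto simp: C_def)
      then have "20 / \<gamma> / \<epsilon> \<le> real d" using dsC dds by linarith
      then have "20 / \<epsilon> \<le> real d * \<gamma>" using e0 assms by (simp add: field_simps)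
      then show ?thesis by (simp add: c_def)
    qed
    define adj1 where "adj1 = constr_adj S1 S2 E s t N1 {}"
    have N1ne: "N1 \<union> {} \<noteq> {}" using cN1 ds20 by auto
    have N1sub: "N1 \<union> {} \<subseteq> S1 \<union> S2" using N1S by auto
    note cp1 = constr_props[OF sn tn st Ein Esym Eirr N1sub N1ne]
    obtain \<phi>1 where r1: "eff_res V adj1 s t = Eg V adj1 \<phi>1 \<phi>1 / 2"
        and dual1: "\<forall>\<psi>. \<psi> s - \<psi> t = Eg V adj1 \<psi> \<phi>1 / 2"
      using effres_char[OF finV _ _ _ sV tV st, of adj1] cp1 unfolding adj1_def V_def by blast
    define K where "K = real ds * (c / (1 + c))"
    have G1: "Eg V adj1 x x / 2 \<ge> K * (x s - x t)^2" for x
    proof -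
      define y where "y w = x w - x t" for w
      define a where "a = x s - x t"
      have eg: "Eg V adj1 x x = 2 * (\<Sum>w\<in>N1. (x s - x w)^2) + 2 * (\<Sum>w\<in>S1 \<union> S2. (x t - x w)^2) + Qf S1 E x"
        using Eg_constr[OF f1 f2 dis st sn tn Ein N1S, of "{}" x] unfolding adj1_def V_def by simp
      have "(\<Sum>w\<in>S1. (y w)^2) \<le> (\<Sum>w\<in>S1 \<union> S2. (y w)^2)"
        using f1 f2 by (intro sum_mono2) auto
      also have "\<dots> = (\<Sum>w\<in>S1 \<union> S2. (x t - x w)^2)"
        by (intro sum.cong refl) (simp add: y_def power2_commute)
      finally have A: "(\<Sum>w\<in>S1. (y w)^2) \<le> (\<Sum>w\<in>S1 \<union> S2. (x t - x w)^2)" .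
      have Qy: "Qf S1 E y = Qf S1 E x" unfolding Qf_def y_def by (intro sum.cong refl) (auto simp: algebra_simps)
      have B: "(\<Sum>w\<in>S1. (y w)^2) + Qf S1 E y / 2 \<ge> c * (\<Sum>w\<in>N1. (y w)^2)"
        by (rule S1_ineq[OF f1 Ein Esym Eirr reg dpos gap N1S c0 c1 c2])
      have "K * (x s - x t)^2 = (\<Sum>w\<in>N1. c / (1 + c) * a^2)"
        using cN1 by (simp add: K_def a_def)
      also have "\<dots> \<le> (\<Sum>w\<in>N1. (a - y w)^2 + c * (y w)^2)"
        by (intro sum_mono quad_min c0)
      also have "\<dots> = (\<Sum>w\<in>N1. (x s - x w)^2) + c * (\<Sum>w\<in>N1. (y w)^2)"
        by (simp add: sum.distrib sum_distrib_left a_def y_def)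
      also have "\<dots> \<le> Eg V adj1 x x / 2"
        using eg A B Qy by linarith
      finally show ?thesis by simp
    qed
    define r1v where "r1v = eff_res V adj1 s t"
    have r1nn: "r1v \<ge> 0" using r1 Eg_nonneg[of V adj1 \<phi>1] by (simp add: r1v_def)
    have r1eq: "\<phi>1 s - \<phi>1 t = r1v" using spec[OF dual1, of \<phi>1] r1 by (simp add: r1v_def)
    have Kr1: "K * r1v \<le> 1"
    proof (cases "r1v = 0")
      case True then show ?thesis by simp
    next
      case False
      then have pos: "r1v > 0" using r1nn by simp
      have e1': "Eg V adj1 \<phi>1 \<phi>1 / 2 = r1v" using r1 unfolding r1v_def by simp
      have "K * (\<phi>1 s - \<phi>1 t)^2 \<le> Eg V adj1 \<phi>1 \<phi>1 / 2" by (rule G1)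
      then have "K * r1v^2 \<le> r1v" unfolding r1eq e1' .
      then have "(K * r1v) * r1v \<le> 1 * r1v" by (simp add: power2_eq_square mult.assoc)
      then show ?thesis using pos by (simp add: mult_le_cancel_right)
    qed
    define adj2 where "adj2 = constr_adj S1 S2 E s t N1' N2'"
    have kds: "k \<le> ds"
    proof -
      have "\<epsilon> * real ds \<le> 1 * real ds" using e1 by (intro mult_right_mono) auto
      then have "real k \<le> real ds" using ek by simp
      then show ?thesis by simp
    qed
    have kr: "real (ds - k) = real ds - real k" using kds by simp
    have N2ne: "N1' \<union> N2' \<noteq> {}"
    proof
      assume "N1' \<union> N2' = {}"
      then have "card N1' = 0" "card N2' = 0" by auto
      then show False using cN1' cN2' kds ds20 by simp
    qed
    have N2sub: "N1' \<union> N2' \<subseteq> S1 \<union> S2" using N1'S N2'S by auto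
    note cp2 = constr_props[OF sn tn st Ein Esym Eirr N2sub N2ne]
    obtain \<phi>2 where r2: "eff_res V adj2 s t = Eg V adj2 \<phi>2 \<phi>2 / 2"
        and dual2: "\<forall>\<psi>. \<psi> s - \<psi> t = Eg V adj2 \<psi> \<phi>2 / 2"
      using effres_char[OF finV _ _ _ sV tV st, of adj2] cp2 unfolding adj2_def V_def by blast
    define \<psi>0 where "\<psi>0 w = (if w = s then 1 else if w \<in> N2' then 1/2 else (0::real))" for w
    define D where "D = real ds - real k / 2"
    have fN1': "finite N1'" using N1'S f1 finite_subset by blast
    have fN2': "finite N2'" using N2'S f2 finite_subset by blast
    have disN: "N1' \<inter> N2' = {}" using N1'S N2'S dis by auto
    have tN2: "t \<notin> N2'" using tn N2'S by auto
    have sN2: "s \<notin> N2'" using sn N2'S by auto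
    have Dval: "Eg V adj2 \<psi>0 \<psi>0 / 2 = D"
    proof -
      have eg: "Eg V adj2 \<psi>0 \<psi>0 = 2 * (\<Sum>w\<in>N1' \<union> N2'. (\<psi>0 s - \<psi>0 w)^2) + 2 * (\<Sum>w\<in>S1 \<union> S2. (\<psi>0 t - \<psi>0 w)^2) + Qf S1 E \<psi>0"
        using Eg_constr[OF f1 f2 dis st sn tn Ein N1'S N2'S, of \<psi>0] unfolding adj2_def V_def by simp
      have q: "Qf S1 E \<psi>0 = 0"
      proof -
        have "\<psi>0 u = 0" if "u \<in> S1" for u using that sn dis N2'S by (auto simp: \<psi>0_def)
        then show ?thesis unfolding Qf_def by (intro sum.neutral ballI) auto
      qed
      have a1: "(\<Sum>w\<in>N1' \<union> N2'. (\<psi>0 s - \<psi>0 w)^2) = (\<Sum>w\<in>N1'. (\<psi>0 s - \<psi>0 w)^2) + (\<Sum>w\<in>N2'. (\<psi>0 s - \<psi>0 w)^2)"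
        using fN1' fN2' disN by (rule sum.union_disjoint)
      have a2: "(\<Sum>w\<in>N1'. (\<psi>0 s - \<psi>0 w)^2) = real (ds - k)"
      proof -
        have "(\<Sum>w\<in>N1'. (\<psi>0 s - \<psi>0 w)^2) = (\<Sum>w\<in>N1'. 1)"
          using disN N1'S sn by (intro sum.cong refl) (auto simp: \<psi>0_def)
        then show ?thesis using cN1' by simp
      qed
      have a3: "(\<Sum>w\<in>N2'. (\<psi>0 s - \<psi>0 w)^2) = real k / 4"
      proof -
        have "(\<Sum>w\<in>N2'. (\<psi>0 s - \<psi>0 w)^2) = (\<Sum>w\<in>N2'. 1/4)"
          using sN2 by (intro sum.cong refl) (auto simp: \<psi>0_def power2_eq_square)
        then show ?thesis using cN2' by simp
      qed
      have a4: "(\<Sum>w\<in>S1 \<union> S2. (\<psi>0 t - \<psi>0 w)^2) = real k / 4"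
      proof -
        have "(\<Sum>w\<in>S1 \<union> S2. (\<psi>0 t - \<psi>0 w)^2) = (\<Sum>w\<in>S1 \<union> S2. if w \<in> N2' then 1/4 else 0)"
          using sn st tN2 by (intro sum.cong refl) (auto simp: \<psi>0_def power2_eq_square)
        also have "\<dots> = (\<Sum>w\<in>(S1 \<union> S2) \<inter> N2'. 1/4)"
          using f1 f2 by (subst sum.inter_restrict) simp_all
        also have "(S1 \<union> S2) \<inter> N2' = N2'" using N2'S by auto
        finally show ?thesis using cN2' by simp
      qed
      show ?thesis using eg q a1 a2 a3 a4 kr by (simp add: D_def)
    qed
    have Dpos: "D > 0" using kds ds20 by (simp add: D_def)
    define r2v where "r2v = eff_res V adj2 s t"
    have one: "Eg V adj2 \<psi>0 \<phi>2 / 2 = 1"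
  proof -
    have "\<psi>0 s - \<psi>0 t = Eg V adj2 \<psi>0 \<phi>2 / 2" using dual2 by blast
    moreover have "\<psi>0 s = 1" "\<psi>0 t = 0" using st tN2 by (auto simp: \<psi>0_def)
    ultimately show ?thesis by simp
  qed
    have Dr2: "D * r2v \<ge> 1"
    proof -
      define l where "l = 1 / D"
      have "0 \<le> Eg V adj2 (\<lambda>u. l * \<psi>0 u - \<phi>2 u) (\<lambda>u. l * \<psi>0 u - \<phi>2 u)" by (rule Eg_nonneg)
      also have "\<dots> = l^2 * Eg V adj2 \<psi>0 \<psi>0 - 2 * l * Eg V adj2 \<psi>0 \<phi>2 + Eg V adj2 \<phi>2 \<phi>2"
        by (rule Eg_expand)
      also have "\<dots> = l^2 * (2 * D) - 2 * l * 2 + 2 * r2v"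
        using Dval one r2 by (simp add: r2v_def)
      also have "\<dots> = 2 * r2v - 2 / D" using Dpos by (simp add: l_def power2_eq_square field_simps)
      finally have "1 / D \<le> r2v" by simp
      then show ?thesis using Dpos by (simp add: field_simps)
    qed
    have Rpos: "real ds > 0" using ds20 by simp
    have Kval: "K = real ds * 10 / (\<epsilon> + 10)"
      using e0 by (simp add: K_def c_def field_simps)
    have Dval2: "D = real ds * (1 - \<epsilon> / 2)" using ek by (simp add: D_def algebra_simps)
    have poly: "(1 + \<epsilon> / 4) * (1 - \<epsilon> / 2) * (\<epsilon> + 10) < 10"
    proof -
      have "(1 + \<epsilon> / 4) * (1 - \<epsilon> / 2) * (\<epsilon> + 10) = 10 - 3/2 * \<epsilon> - 3/2 * \<epsilon>^2 - \<epsilon>^3 / 8"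
        by (simp add: power2_eq_square power3_eq_cube algebra_simps)
      moreover have "\<epsilon>^2 \<ge> 0" "\<epsilon>^3 \<ge> 0" using e0 by auto
      ultimately show ?thesis using e0 by linarith
    qed
    have KD: "(1 + \<epsilon> / 4) * D < K"
    proof -
      have "(1 + \<epsilon> / 4) * D * (\<epsilon> + 10) = real ds * ((1 + \<epsilon> / 4) * (1 - \<epsilon> / 2) * (\<epsilon> + 10))"
        unfolding Dval2 by (simp add: field_simps)
      also have "\<dots> < real ds * 10" using poly Rpos by (simp only: mult_less_cancel_left_pos)
      finally have "(1 + \<epsilon> / 4) * D * (\<epsilon> + 10) < real ds * 10" .
      then show ?thesis using e0 by (simp add: Kval field_simps)
    qed
    have Kpos: "K > 0" using Kval Rpos e0 by simp
    have main: "(1 + \<epsilon> / 4) * r1v < r2v"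
    proof -
      have r1K: "r1v \<le> 1 / K" using Kr1 Kpos by (simp add: pos_le_divide_eq mult.commute)
      have "(1 + \<epsilon> / 4) * r1v \<le> (1 + \<epsilon> / 4) * (1 / K)"
        using r1K e0 by (intro mult_left_mono) auto
      also have "\<dots> < 1 / D" using KD Kpos Dpos by (simp add: field_simps)
      also have "\<dots> \<le> r2v" using Dr2 Dpos by (simp add: divide_le_eq mult.commute)
      finally show ?thesis .
    qed
    have "\<bar>r1v - r2v\<bar> > \<epsilon> / 4 * r1v" using main by (simp add: algebra_simps abs_if)
    then show "let V = S1 \<union> S2 \<union> {s, t};
           r1 = eff_res V (constr_adj S1 S2 E s t N1 {}) s t;
           r2 = eff_res V (constr_adj S1 S2 E s t N1' N2') s t
       in \<bar>r1 - r2\<bar> > \<epsilon> / 4 * r1"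
      unfolding Let_def r1v_def r2v_def V_def adj1_def adj2_def .
  qed
qed

end
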